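(* For every integer $n\ge 0$, $$\sum_{\pi\in \mathcal I^C_{2n}(321)}q^{\mathrm{des}^+(\pi)}=\sum_{k\geq 0} \binom{n+1}{2k}q^k=\frac{(1+\sqrt{q})^{n+1}+(1-\sqrt{q})^{n+1}}{2}.$$
   Context: A permutation $\pi\in\mathcal S_m$ is centrosymmetric if $\pi(i)+\pi(m+1-i)=m+1$ for all $1\le i\le m$. $\mathcal I^C_m(321)$ denotes the set of centrosymmetric involutions $\pi\in\mathcal S_m$ (i.e. $\pi=\pi^{-1}$) that avoid the pattern $321$ (no indices $i<j<k$ with $\pi(i)>\pi(j)>\pi(k)$). A descent of $\pi\in\mathcal S_m$ is a position $i\in\{1,\dots,m-1\}$ with $\pi(i)>\pi(i+1)$; $\mathrm{Des}(\pi)$ is the set of descents. For $\pi\in\mathcal S_m$ with $n=\lfloor m/2\rfloor$, $\mathrm{Des}^+(\pi)=\mathrm{Des}(\pi)\cap\{1,\dots,n\}$ and $\mathrm{des}^+(\pi)=|\mathrm{Des}^+(\pi)|$. *)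

theory Defs
  imports "HOL-Combinatorics.Permutations" Complex_Main
begin

definition centrosymmetric :: "nat \<Rightarrow> (nat \<Rightarrow> nat) \<Rightarrow> bool" where
  "centrosymmetric m \<pi> \<longleftrightarrow> (\<forall>i\<in>{1..m}. \<pi> i + \<pi> (m + 1 - i) = m + 1)"

definition avoids321 :: "nat \<Rightarrow> (nat \<Rightarrow> nat) \<Rightarrow> bool" where
  "avoids321 m \<pi> \<longleftrightarrow>
     \<not> (\<exists>i j k. 1 \<le> i \<and> i < j \<and> j < k \<and> k \<le> m \<and> \<pi> i > \<pi> j \<and> \<pi> j > \<pi> k)"

definition centro_inv_321 :: "nat \<Rightarrow> (nat \<Rightarrow> nat) set" where
  "centro_inv_321 m = {\<pi>. \<pi> permutes {1..m} \<and> inv \<pi> = \<pi> \<and> centrosymmetric m \<pi> \<and> avoids321 m \<pi>}"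

definition Des :: "nat \<Rightarrow> (nat \<Rightarrow> nat) \<Rightarrow> nat set" where
  "Des m \<pi> = {i \<in> {1..m - 1}. \<pi> i > \<pi> (i + 1)}"

definition des_plus :: "nat \<Rightarrow> (nat \<Rightarrow> nat) \<Rightarrow> nat" where
  "des_plus m \<pi> = card (Des m \<pi> \<inter> {1..m div 2})"

end

theory Submission
  imports Defs
begin

definition smb :: "nat set \<Rightarrow> nat set \<Rightarrow> (nat \<Rightarrow> nat) \<Rightarrow> bool" where
  "smb A B f \<longleftrightarrow> bij_betw f A B \<and> (\<forall>x\<in>A. \<forall>y\<in>A. x < y \<longrightarrow> f x < f y)"

lemma smb_exists:
  assumes "finite A" "finite B" "card A = card B"
  shows "\<exists>f. smb A B f"
proof -
  define la where "la = sorted_list_of_set A"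
  define lb where "lb = sorted_list_of_set B"
  have la: "sorted_wrt (<) la" "distinct la" "set la = A" "length la = card A"
    using assms by (auto simp: la_def)
  have lb: "sorted_wrt (<) lb" "distinct lb" "set lb = B" "length lb = card A"
    using assms by (auto simp: lb_def)
  have ba: "bij_betw ((!) la) {..<card A} A"
    by (rule bij_betw_nth) (use la in auto)
  have bb: "bij_betw ((!) lb) {..<card A} B"
    by (rule bij_betw_nth) (use lb in auto)
  define h where "h = inv_into {..<card A} ((!) la)"
  have bh: "bij_betw h A {..<card A}"
    unfolding h_def by (rule bij_betw_inv_into[OF ba])
  define f where "f = (\<lambda>x. lb ! h x)"
  have "bij_betw f A B"
    unfolding f_def using bij_betw_trans[OF bh bb] by (simp add: comp_def)
  moreover have "\<forall>x\<in>A. \<forall>y\<in>A. x < y \<longrightarrow> f x < f y"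
  proof (intro ballI impI)
    fix x y assume xy: "x \<in> A" "y \<in> A" "x < y"
    have hx: "h x < card A" "la ! h x = x"
      using xy bh ba unfolding h_def
      by (auto simp: bij_betw_def f_inv_into_f)
    have hy: "h y < card A" "la ! h y = y"
      using xy bh ba unfolding h_def
      by (auto simp: bij_betw_def f_inv_into_f)
    have "h x < h y"
    proof (rule ccontr)
      assume "\<not> h x < h y"
      then have "h y < h x \<or> h y = h x" by auto
      then show False
      proof
        assume "h y < h x"
        then have "la ! h y < la ! h x" using sorted_wrt_nth_less[OF la(1)] hx la(4) by metis
        then show False using hx hy xy by auto
      next
        assume "h y = h x" then show False using hx hy xy by auto
      qed
    qed
    then show "f x < f y" unfolding f_def using sorted_wrt_nth_less[OF lb(1)] hy lb(4) by auto
  qed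
  ultimately show ?thesis unfolding smb_def by blast
qed

lemma smb_unique_aux:
  assumes f: "smb A B f" and g: "smb A B g" and x: "x \<in> A" "f x < g x"
    and least: "\<forall>y\<in>A. y < x \<longrightarrow> f y = g y"
  shows False
proof -
  have "f x \<in> B" using f x unfolding smb_def bij_betw_def by auto
  then obtain y where y: "y \<in> A" "g y = f x" using g unfolding smb_def bij_betw_def by auto
  have "y < x"
  proof (rule ccontr)
    assume "\<not> y < x"
    then have "x \<le> y" by simp
    then have "g x \<le> g y" using g x y unfolding smb_def by (metis order_le_less)
    then show False using x y by simp
  qed
  then have "f y = f x" using least y by simp
  then have "y = x" using f x y unfolding smb_def bij_betw_def inj_on_def by blast
  then show False using \<open>y < x\<close> by simp
qed

lemma smb_unique:
  assumes f: "smb A B f" and g: "smb A B g"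
  shows "\<forall>x\<in>A. f x = g x"
proof (rule ccontr)
  assume "\<not> (\<forall>x\<in>A. f x = g x)"
  then have "\<exists>x. x \<in> A \<and> f x \<noteq> g x" by blast
  then obtain x where x: "x \<in> A \<and> f x \<noteq> g x" 
    and least: "\<And>y. y < x \<Longrightarrow> \<not> (y \<in> A \<and> f y \<noteq> g y)"
    using exists_least_iff[of "\<lambda>x. x \<in> A \<and> f x \<noteq> g x"] by blast
  have l1: "\<forall>y\<in>A. y < x \<longrightarrow> f y = g y" and l2: "\<forall>y\<in>A. y < x \<longrightarrow> g y = f y"
    using least by auto
  show False
  proof (cases "f x < g x")
    case True then show ?thesis using smb_unique_aux[OF f g _ _ l1] x by blast
  next
    case False then have "g x < f x" using x by auto
    then show ?thesis using smb_unique_aux[OF g f _ _ l2] x by blast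
  qed
qed

lemma smb_inv:
  assumes f: "smb A B f"
  shows "smb B A (inv_into A f)"
proof -
  have b: "bij_betw f A B" using f unfolding smb_def by simp
  have "bij_betw (inv_into A f) B A" by (rule bij_betw_inv_into[OF b])
  moreover have "\<forall>x\<in>B. \<forall>y\<in>B. x < y \<longrightarrow> inv_into A f x < inv_into A f y"
  proof (intro ballI impI)
    fix x y assume xy: "x \<in> B" "y \<in> B" "x < y"
    have ix: "inv_into A f x \<in> A" "f (inv_into A f x) = x" using xy b
      by (auto simp: bij_betw_def inv_into_into f_inv_into_f)
    have iy: "inv_into A f y \<in> A" "f (inv_into A f y) = y" using xy b
      by (auto simp: bij_betw_def inv_into_into f_inv_into_f)
    show "inv_into A f x < inv_into A f y"
    proof (rule ccontr)
      assume "\<not> ?thesis"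
      then have "inv_into A f y < inv_into A f x \<or> inv_into A f y = inv_into A f x" by auto
      then show False
      proof
        assume "inv_into A f y < inv_into A f x"
        then have "f (inv_into A f y) < f (inv_into A f x)" using f ix iy unfolding smb_def by blast
        then show False using ix iy xy by simp
      next
        assume "inv_into A f y = inv_into A f x"
        then have "x = y" using ix iy by metis
        then show False using xy by simp
      qed
    qed
  qed
  ultimately show ?thesis unfolding smb_def by blast
qed

lemma smb_below:
  assumes f: "smb A B f" and e: "e \<in> A"
  shows "{d\<in>B. d < f e} = f ` {a\<in>A. a < e}" "{d\<in>B. d \<le> f e} = f ` {a\<in>A. a \<le> e}"
proof -
  have b: "bij_betw f A B" and m: "\<forall>x\<in>A. \<forall>y\<in>A. x < y \<longrightarrow> f x < f y" using f unfolding smb_def by auto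
  have iff: "\<And>a. a \<in> A \<Longrightarrow> f a < f e \<longleftrightarrow> a < e"
    using m e by (metis linorder_neqE_nat order_less_asym order_less_irrefl)
  have iff2: "\<And>a. a \<in> A \<Longrightarrow> f a \<le> f e \<longleftrightarrow> a \<le> e"
    using m e by (metis linorder_not_less order_le_less)
  show "{d\<in>B. d < f e} = f ` {a\<in>A. a < e}"
    using b iff unfolding bij_betw_def by auto
  show "{d\<in>B. d \<le> f e} = f ` {a\<in>A. a \<le> e}"
    using b iff2 unfolding bij_betw_def by auto
qed

lemma card_lt_helper:
  assumes "finite B" "A \<subseteq> B" "x \<in> B" "x \<notin> A"
  shows "card A < card B"
  using assms by (metis psubsetI psubset_card_mono)

lemma build_exists:
  fixes m :: nat and E D :: "nat set"
  assumes ED: "E \<subseteq> {1..m}" "D \<subseteq> {1..m}" "E \<inter> D = {}" and rho: "(\<lambda>x. m+1-x) ` E = D"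
    and ballot: "\<forall>t\<le>m. card {d\<in>D. d \<le> t} \<le> card {e\<in>E. e \<le> t}"
    and fcond: "\<forall>x\<in>{1..m}. x \<notin> E \<longrightarrow> x \<notin> D \<longrightarrow> card {d\<in>D. d \<le> x} = card {e\<in>E. e \<le> x}"
  shows "\<exists>\<pi>\<in>centro_inv_321 m. {i\<in>{1..m}. \<pi> i > i} = E"
proof -
  define \<rho> where "\<rho> = (\<lambda>x::nat. m+1-x)"
  have rr: "\<And>x. x \<in> {1..m} \<Longrightarrow> \<rho> (\<rho> x) = x" "\<And>x. x \<in> {1..m} \<Longrightarrow> \<rho> x \<in> {1..m}"
    unfolding \<rho>_def by auto
  have injr: "inj_on \<rho> {1..m}" using rr by (metis inj_on_inverseI)
  have finE: "finite E" and finD: "finite D" using ED finite_subset by blast+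
  have rED: "\<rho> ` E = D" using rho unfolding \<rho>_def by simp
  have rDE: "\<rho> ` D = E"
  proof -
    have "\<rho> ` D = \<rho> ` \<rho> ` E" using rED by simp
    also have "\<dots> = E" using rr ED by (force simp: image_image)
    finally show ?thesis .
  qed
  have bEr: "bij_betw \<rho> E D" using rED injr ED by (simp add: bij_betw_def inj_on_subset)
  have bDr: "bij_betw \<rho> D E" using rDE injr ED by (simp add: bij_betw_def inj_on_subset)
  have cED: "card E = card D" using bEr bij_betw_same_card by blast
  obtain f where f: "smb E D f" using smb_exists[OF finE finD cED] by blast
  define g where "g = inv_into E f"
  have g: "smb D E g" unfolding g_def by (rule smb_inv[OF f])
  have fE: "\<And>e. e \<in> E \<Longrightarrow> f e \<in> D" using f unfolding smb_def bij_betw_def by auto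
  have gD: "\<And>d. d \<in> D \<Longrightarrow> g d \<in> E" using g unfolding smb_def bij_betw_def by auto
  have fE1: "\<And>e. e \<in> E \<Longrightarrow> f e \<in> {1..m}" using fE ED by blast
  have gD1: "\<And>e. e \<in> D \<Longrightarrow> g e \<in> {1..m}" using gD ED by blast
  have gf: "\<And>e. e \<in> E \<Longrightarrow> g (f e) = e" using f unfolding smb_def g_def bij_betw_def by auto
  have fg: "\<And>d. d \<in> D \<Longrightarrow> f (g d) = d" using f unfolding smb_def g_def bij_betw_def
    by (auto simp: f_inv_into_f)
  have fm: "\<And>x y. x \<in> E \<Longrightarrow> y \<in> E \<Longrightarrow> x < y \<Longrightarrow> f x < f y" using f unfolding smb_def by blast
  have gm: "\<And>x y. x \<in> D \<Longrightarrow> y \<in> D \<Longrightarrow> x < y \<Longrightarrow> g x < g y" using g unfolding smb_def by blast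
  have exc: "\<And>e. e \<in> E \<Longrightarrow> e < f e"
  proof (rule ccontr)
    fix e assume e: "e \<in> E" and "\<not> e < f e"
    then have de: "f e < e" using fE ED by (metis IntI empty_iff linorder_neqE_nat)
    have "card {d\<in>D. d \<le> f e} = card {a\<in>E. a \<le> e}"
      using smb_below(2)[OF f e] f unfolding smb_def bij_betw_def
      by (metis (no_types, lifting) card_image inj_on_subset mem_Collect_eq subsetI)
    moreover have "card {a\<in>E. a \<le> f e} < card {a\<in>E. a \<le> e}"
      by (rule card_lt_helper) (use finE e de in auto)
    moreover have "card {d\<in>D. d \<le> f e} \<le> card {a\<in>E. a \<le> f e}" using ballot fE[OF e] ED by auto
    ultimately show False by linarith
  qed
  have fix_not_under: "\<And>e x. e \<in> E \<Longrightarrow> x \<in> {1..m} \<Longrightarrow> x \<notin> E \<Longrightarrow> x \<notin> D \<Longrightarrow> e < x \<Longrightarrow> x < f e \<Longrightarrow> False"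
  proof -
    fix e x assume e: "e \<in> E" and x: "x \<in> {1..m}" "x \<notin> E" "x \<notin> D" "e < x" "x < f e"
    have "{d\<in>D. d \<le> x} \<subseteq> {d\<in>D. d < f e}" using x by auto
    then have "card {d\<in>D. d \<le> x} \<le> card {d\<in>D. d < f e}" by (rule card_mono[rotated]) (use finD in auto)
    also have "card {d\<in>D. d < f e} = card {a\<in>E. a < e}"
      using smb_below(1)[OF f e] f unfolding smb_def bij_betw_def
      by (metis (no_types, lifting) card_image inj_on_subset mem_Collect_eq subsetI)
    also have "card {a\<in>E. a < e} < card {a\<in>E. a \<le> x}"
      by (rule card_lt_helper) (use finE e x in auto)
    finally have "card {d\<in>D. d \<le> x} < card {a\<in>E. a \<le> x}" .
    moreover have "card {d\<in>D. d \<le> x} = card {a\<in>E. a \<le> x}" using fcond x by blast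
    ultimately show False by linarith
  qed
  define \<pi> where "\<pi> = (\<lambda>x. if x \<in> E then f x else if x \<in> D then g x else x)"
  have pp: "\<And>x. \<pi> (\<pi> x) = x"
    unfolding \<pi>_def using fE gD gf fg ED(3) by auto
  have pin: "\<And>x. x \<in> {1..m} \<Longrightarrow> \<pi> x \<in> {1..m}"
  proof -
    fix x assume x: "x \<in> {1..m}"
    have a: "\<And>e. e \<in> E \<Longrightarrow> f e \<in> {1..m}" using fE ED by blast
    have b: "\<And>e. e \<in> D \<Longrightarrow> g e \<in> {1..m}" using gD ED by blast
    show "\<pi> x \<in> {1..m}" unfolding \<pi>_def using a b x by simp
  qed
  have pout: "\<And>x. x \<notin> {1..m} \<Longrightarrow> \<pi> x = x"
    unfolding \<pi>_def using ED by auto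
  have perm: "\<pi> permutes {1..m}"
    unfolding permutes_def using pout pp by metis
  have inv: "inv \<pi> = \<pi>"
    by (rule inv_unique_comp) (use pp in auto)
  define f' where "f' = (\<lambda>x. \<rho> (g (\<rho> x)))"
  have "smb E D f'"
  proof -
    have "bij_betw f' E D"
    proof -
      have b1: "bij_betw g D E" using g unfolding smb_def by simp
      have "bij_betw (\<rho> \<circ> (g \<circ> \<rho>)) E D"
        by (rule bij_betw_trans[OF bij_betw_trans[OF bEr b1] bEr])
      then show ?thesis unfolding f'_def comp_def .
    qed
    moreover have "\<forall>x\<in>E. \<forall>y\<in>E. x < y \<longrightarrow> f' x < f' y"
    proof (intro ballI impI)
      fix x y assume xy: "x \<in> E" "y \<in> E" "x < y"
      have "\<rho> y < \<rho> x" using xy ED unfolding \<rho>_def by auto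
      moreover have "\<rho> x \<in> D" "\<rho> y \<in> D" using xy rED by auto
      ultimately have "g (\<rho> y) < g (\<rho> x)" using gm by blast
      moreover have "g (\<rho> x) \<in> {1..m}" "g (\<rho> y) \<in> {1..m}" using gD \<open>\<rho> x \<in> D\<close> \<open>\<rho> y \<in> D\<close> gD1 by blast+
      ultimately show "f' x < f' y" unfolding f'_def \<rho>_def by auto
    qed
    ultimately show ?thesis unfolding smb_def by blast
  qed
  then have ff': "\<And>x. x \<in> E \<Longrightarrow> f x = \<rho> (g (\<rho> x))"
    using smb_unique[OF f] unfolding f'_def by blast
  have DE_iff: "\<And>i. i \<in> {1..m} \<Longrightarrow> \<rho> i \<in> E \<longleftrightarrow> i \<in> D"
    using rED rDE rr by (metis imageE imageI)
  have ED_iff: "\<And>i. i \<in> {1..m} \<Longrightarrow> \<rho> i \<in> D \<longleftrightarrow> i \<in> E"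
    using rED rDE rr by (metis imageE imageI)
  have centro: "centrosymmetric m \<pi>"
    unfolding centrosymmetric_def
  proof
    fix i assume i: "i \<in> {1..m}"
    have ri: "m + 1 - i = \<rho> i" unfolding \<rho>_def by simp
    show "\<pi> i + \<pi> (m + 1 - i) = m + 1"
    proof (cases "i \<in> E")
      case True
      then have "\<rho> i \<in> D" "\<rho> i \<notin> E" using ED_iff[OF i] ED(3) by auto
      then have "\<pi> (\<rho> i) = g (\<rho> i)" unfolding \<pi>_def by simp
      moreover have "g (\<rho> i) = \<rho> (f i)"
        using ff'[OF True] rr gD \<open>\<rho> i \<in> D\<close> ED by (metis subsetD)
      moreover have "\<pi> i = f i" using True unfolding \<pi>_def by simp
      moreover have "f i \<in> {1..m}" using fE[OF True] ED by auto
      ultimately show ?thesis using ri unfolding \<rho>_def by auto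
    next
      case False
      show ?thesis
      proof (cases "i \<in> D")
        case True
        then have rE: "\<rho> i \<in> E" using DE_iff[OF i] by simp
        then have "\<pi> (\<rho> i) = f (\<rho> i)" unfolding \<pi>_def by simp
        also have "\<dots> = \<rho> (g i)" using ff'[OF rE] rr[OF i] by simp
        finally have "\<pi> (\<rho> i) = \<rho> (g i)" .
        moreover have "\<pi> i = g i" using True False unfolding \<pi>_def by simp
        moreover have "g i \<in> {1..m}" using gD[OF True] ED by auto
        ultimately show ?thesis using ri unfolding \<rho>_def by auto
      next
        case False2: False
        then have "\<rho> i \<notin> E" "\<rho> i \<notin> D" using DE_iff[OF i] ED_iff[OF i] False by auto
        then have "\<pi> (\<rho> i) = \<rho> i" unfolding \<pi>_def by simp
        moreover have "\<pi> i = i" using False False2 unfolding \<pi>_def by simp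
        ultimately show ?thesis using ri i unfolding \<rho>_def by auto
      qed
    qed
  qed
  have incr: "\<And>x y. x \<in> {1..m} \<Longrightarrow> y \<in> {1..m} \<Longrightarrow> x < y \<Longrightarrow> (x \<in> E \<longleftrightarrow> y \<in> E) \<Longrightarrow> \<pi> x < \<pi> y"
  proof -
    fix x y assume x: "x \<in> {1..m}" and y: "y \<in> {1..m}" and xy: "x < y" and c: "(x \<in> E \<longleftrightarrow> y \<in> E)"
    show "\<pi> x < \<pi> y"
    proof (cases "x \<in> E")
      case True then show ?thesis using c fm xy unfolding \<pi>_def by simp
    next
      case False
      then have yE: "y \<notin> E" using c by simp
      show ?thesis
      proof (cases "x \<in> D")
        case xD: True
        show ?thesis
        proof (cases "y \<in> D")
          case True then show ?thesis using xD False yE gm xy unfolding \<pi>_def by simp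
        next
          case yD: False
          have "g x < x" using exc[OF gD[OF xD]] fg[OF xD] by simp
          then show ?thesis using xD False yE yD xy unfolding \<pi>_def by simp
        qed
      next
        case xD: False
        show ?thesis
        proof (cases "y \<in> D")
          case yD: True
          have "x < g y"
          proof (rule ccontr)
            assume "\<not> x < g y"
            moreover have "g y \<noteq> x" using gD[OF yD] False by auto
            ultimately have "g y < x" by simp
            then show False using fix_not_under[OF gD[OF yD] x False xD] fg[OF yD] xy by simp
          qed
          then show ?thesis using xD False yE yD unfolding \<pi>_def by simp
        next
          case False2: False
          then show ?thesis using xD False yE xy unfolding \<pi>_def by simp
        qed
      qed
    qed
  qed
  have av: "avoids321 m \<pi>"
    unfolding avoids321_def
  proof
    assume "\<exists>i j k. 1 \<le> i \<and> i < j \<and> j < k \<and> k \<le> m \<and> \<pi> j < \<pi> i \<and> \<pi> k < \<pi> j"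
    then obtain i j k where ijk: "1 \<le> i" "i < j" "j < k" "k \<le> m" "\<pi> j < \<pi> i" "\<pi> k < \<pi> j" by blast
    have r: "i \<in> {1..m}" "j \<in> {1..m}" "k \<in> {1..m}" using ijk by auto
    show False
    proof (cases "i \<in> E \<longleftrightarrow> j \<in> E")
      case True then show ?thesis using incr[OF r(1) r(2)] ijk by fastforce
    next
      case False
      show ?thesis
      proof (cases "j \<in> E \<longleftrightarrow> k \<in> E")
        case True then show ?thesis using incr[OF r(2) r(3)] ijk by fastforce
      next
        case False2: False
        then have "i \<in> E \<longleftrightarrow> k \<in> E" using False by blast
        then show ?thesis using incr[OF r(1) r(3)] ijk by fastforce
      qed
    qed
  qed
  have mem: "\<pi> \<in> centro_inv_321 m"
    unfolding centro_inv_321_def using perm inv centro av by blast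
  have "{i\<in>{1..m}. \<pi> i > i} = E"
  proof (intro set_eqI iffI)
    fix i assume i: "i \<in> {i\<in>{1..m}. \<pi> i > i}"
    show "i \<in> E"
    proof (rule ccontr)
      assume nE: "i \<notin> E"
      show False
      proof (cases "i \<in> D")
        case True
        have "g i < i" using exc[OF gD[OF True]] fg[OF True] by simp
        then show False using i nE True unfolding \<pi>_def by simp
      next
        case False then show False using i nE unfolding \<pi>_def by simp
      qed
    qed
  next
    fix i assume "i \<in> E"
    then show "i \<in> {i\<in>{1..m}. \<pi> i > i}" using exc ED unfolding \<pi>_def by auto
  qed
  then show ?thesis using mem by blast
qed

fun hgt :: "nat set \<Rightarrow> nat \<Rightarrow> nat" where
  "hgt S 0 = 0"
| "hgt S (Suc i) = (if Suc i \<in> S then Suc (hgt S i) else hgt S i - 1)"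

lemma card_le_Suc:
  assumes "finite A"
  shows "card {x\<in>A. x \<le> Suc t} = card {x\<in>A. x \<le> t} + (if Suc t \<in> A then 1 else 0)"
proof (cases "Suc t \<in> A")
  case True
  have "{x\<in>A. x \<le> Suc t} = insert (Suc t) {x\<in>A. x \<le> t}" using True by auto
  then show ?thesis using True assms by simp
next
  case False
  have "{x\<in>A. x \<le> Suc t} = {x\<in>A. x \<le> t}" using False by (auto simp: le_Suc_eq)
  then show ?thesis using False by simp
qed

lemma card_split_le:
  fixes A :: "nat set"
  assumes "finite A"
  shows "card {x\<in>A. u < x} + card {x\<in>A. x \<le> u} = card A"
proof -
  have "A = {x\<in>A. u < x} \<union> {x\<in>A. x \<le> u}" by (auto simp: not_le)
  moreover have "{x\<in>A. u < x} \<inter> {x\<in>A. x \<le> u} = {}" by auto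
  ultimately show ?thesis using assms
    by (metis (no_types, lifting) card_Un_disjoint finite_Un)
qed

lemma card_refl_le:
  fixes n t :: nat
  assumes "A \<subseteq> {1..n}" "n \<le> t" "t \<le> 2*n"
  shows "card {y\<in>(\<lambda>x. 2*n+1-x) ` A. y \<le> t} = card {x\<in>A. 2*n - t < x}"
proof -
  have "{y\<in>(\<lambda>x. 2*n+1-x) ` A. y \<le> t} = (\<lambda>x. 2*n+1-x) ` {x\<in>A. 2*n - t < x}"
    using assms by force
  moreover have "inj_on (\<lambda>x. 2*n+1-x) {x\<in>A. 2*n - t < x}"
    using assms by (auto simp: inj_on_def)
  ultimately show ?thesis by (simp add: card_image)
qed

lemma hgt_count:
  assumes S: "S \<subseteq> {1..n}" and t: "t \<le> n"
  shows "card {s\<in>S. s \<le> t} = card {d\<in>{i\<in>{1..n}. i \<notin> S \<and> hgt S (i-1) > 0}. d \<le> t} + hgt S t"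
  using t
proof (induction t)
  case 0
  have "{s\<in>S. s \<le> 0} = {}" using S by auto
  moreover have "{d\<in>{i\<in>{1..n}. i \<notin> S \<and> hgt S (i-1) > 0}. d \<le> 0} = {}" by auto
  ultimately show ?case by (metis card.empty hgt.simps(1) add_0)
next
  case (Suc t)
  define D1 where "D1 = {i\<in>{1..n}. i \<notin> S \<and> hgt S (i-1) > 0}"
  have fS: "finite S" using S finite_subset by blast
  have fD: "finite D1" unfolding D1_def by simp
  have IH: "card {s\<in>S. s \<le> t} = card {d\<in>D1. d \<le> t} + hgt S t" using Suc D1_def by simp
  have e1: "card {s\<in>S. s \<le> Suc t} = card {s\<in>S. s \<le> t} + (if Suc t \<in> S then 1 else 0)"
    by (rule card_le_Suc[OF fS])
  have e2: "card {d\<in>D1. d \<le> Suc t} = card {d\<in>D1. d \<le> t} + (if Suc t \<in> D1 then 1 else 0)"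
    by (rule card_le_Suc[OF fD])
  have m: "Suc t \<in> D1 \<longleftrightarrow> Suc t \<notin> S \<and> hgt S t > 0" unfolding D1_def using Suc.prems by auto
  show ?case unfolding D1_def[symmetric] using IH e1 e2 m by auto
qed

lemma refl_sub:
  fixes n :: nat
  assumes "A \<subseteq> {1..n}"
  shows "(\<lambda>x. 2*n+1-x) ` A \<subseteq> {n+1..2*n}"
proof
  fix y assume "y \<in> (\<lambda>x. 2*n+1-x) ` A"
  then obtain x where "x \<in> A" "y = 2*n+1-x" by blast
  then have "x \<in> {1..n}" using assms by blast
  then show "y \<in> {n+1..2*n}" using \<open>y = 2*n+1-x\<close> by auto
qed

lemma count_ED:
  fixes n :: nat
  assumes S: "S \<subseteq> {1..n}"
  defines "D1 \<equiv> {i\<in>{1..n}. i \<notin> S \<and> hgt S (i-1) > 0}"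
  defines "E \<equiv> S \<union> (\<lambda>x. 2*n+1-x) ` D1"
  defines "D \<equiv> D1 \<union> (\<lambda>x. 2*n+1-x) ` S"
  assumes t: "t \<le> 2*n"
  shows "card {d\<in>D. d \<le> t} + hgt S (if t \<le> n then t else 2*n - t) = card {e\<in>E. e \<le> t}"
proof -
  have D1: "D1 \<subseteq> {1..n}" unfolding D1_def by auto
  have fS: "finite S" using S finite_subset by blast
  have fD1: "finite D1" using D1 finite_subset by blast
  have rD1: "(\<lambda>x. 2*n+1-x) ` D1 \<subseteq> {n+1..2*n}" by (rule refl_sub[OF D1])
  have rS: "(\<lambda>x. 2*n+1-x) ` S \<subseteq> {n+1..2*n}" by (rule refl_sub[OF S])
  have Eu: "{e\<in>E. e \<le> t} = {s\<in>S. s \<le> t} \<union> {y\<in>(\<lambda>x. 2*n+1-x) ` D1. y \<le> t}"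
    unfolding E_def by auto
  have Du: "{d\<in>D. d \<le> t} = {s\<in>D1. s \<le> t} \<union> {y\<in>(\<lambda>x. 2*n+1-x) ` S. y \<le> t}"
    unfolding D_def by auto
  have cE: "card {e\<in>E. e \<le> t} = card {s\<in>S. s \<le> t} + card {y\<in>(\<lambda>x. 2*n+1-x) ` D1. y \<le> t}"
  proof (unfold Eu, rule card_Un_disjoint)
    show "{s\<in>S. s \<le> t} \<inter> {y\<in>(\<lambda>x. 2*n+1-x) ` D1. y \<le> t} = {}"
    proof (rule ccontr)
      assume "\<not> ?thesis"
      then obtain y where "y \<in> S" "y \<in> (\<lambda>x. 2*n+1-x) ` D1" by blast
      then show False using S rD1 by fastforce
    qed
  qed (use fS fD1 in auto)
  have cD: "card {d\<in>D. d \<le> t} = card {s\<in>D1. s \<le> t} + card {y\<in>(\<lambda>x. 2*n+1-x) ` S. y \<le> t}"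
  proof (unfold Du, rule card_Un_disjoint)
    show "{s\<in>D1. s \<le> t} \<inter> {y\<in>(\<lambda>x. 2*n+1-x) ` S. y \<le> t} = {}"
    proof (rule ccontr)
      assume "\<not> ?thesis"
      then obtain y where "y \<in> D1" "y \<in> (\<lambda>x. 2*n+1-x) ` S" by blast
      then show False using D1 rS by fastforce
    qed
  qed (use fS fD1 in auto)
  show ?thesis
  proof (cases "t \<le> n")
    case True
    have "{y\<in>(\<lambda>x. 2*n+1-x) ` D1. y \<le> t} = {}" using rD1 True by fastforce
    then have z1: "card {y\<in>(\<lambda>x. 2*n+1-x) ` D1. y \<le> t} = 0" by (metis card.empty)
    have "{y\<in>(\<lambda>x. 2*n+1-x) ` S. y \<le> t} = {}" using rS True by fastforce
    then have z2: "card {y\<in>(\<lambda>x. 2*n+1-x) ` S. y \<le> t} = 0" by (metis card.empty)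
    have hh: "card {s\<in>S. s \<le> t} = card {d\<in>D1. d \<le> t} + hgt S t"
      unfolding D1_def by (rule hgt_count[OF S True])
    show ?thesis unfolding if_P[OF True] using cE cD z1 z2 hh by linarith
  next
    case False
    define u where "u = 2*n - t"
    have u: "u \<le> n" using False t unfolding u_def by simp
    have a1: "{s\<in>S. s \<le> t} = S" using S False by auto
    have a2: "{s\<in>D1. s \<le> t} = D1" using D1 False by auto
    have a3: "card {y\<in>(\<lambda>x. 2*n+1-x) ` D1. y \<le> t} = card {x\<in>D1. u < x}"
      unfolding u_def by (rule card_refl_le[OF D1]) (use False t in auto)
    have a4: "card {y\<in>(\<lambda>x. 2*n+1-x) ` S. y \<le> t} = card {x\<in>S. u < x}"
      unfolding u_def by (rule card_refl_le[OF S]) (use False t in auto)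
    have b1: "card {x\<in>D1. u < x} + card {x\<in>D1. x \<le> u} = card D1" by (rule card_split_le[OF fD1])
    have b2: "card {x\<in>S. u < x} + card {x\<in>S. x \<le> u} = card S" by (rule card_split_le[OF fS])
    have h: "card {s\<in>S. s \<le> u} = card {d\<in>D1. d \<le> u} + hgt S u"
      unfolding D1_def by (rule hgt_count[OF S u])
    have "card {e\<in>E. e \<le> t} = card S + card {x\<in>D1. u < x}" using cE a1 a3 by simp
    moreover have "card {d\<in>D. d \<le> t} = card D1 + card {x\<in>S. u < x}" using cD a2 a4 by simp
    ultimately show ?thesis unfolding if_not_P[OF False] u_def[symmetric] using b1 b2 h by linarith
  qed
qed

lemma exists_perm:
  fixes n :: nat
  assumes S: "S \<subseteq> {1..n}"
  shows "\<exists>\<pi>\<in>centro_inv_321 (2*n). {i\<in>{1..n}. \<pi> i > i} = S"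
proof -
  define D1 where "D1 = {i\<in>{1..n}. i \<notin> S \<and> hgt S (i-1) > 0}"
  define E where "E = S \<union> (\<lambda>x. 2*n+1-x) ` D1"
  define D where "D = D1 \<union> (\<lambda>x. 2*n+1-x) ` S"
  have cnt: "\<And>t. t \<le> 2*n \<Longrightarrow> card {d\<in>D. d \<le> t} + hgt S (if t \<le> n then t else 2*n - t) = card {e\<in>E. e \<le> t}"
    unfolding D_def E_def D1_def by (rule count_ED[OF S])
  have D1: "D1 \<subseteq> {1..n}" unfolding D1_def by auto
  have rD1: "(\<lambda>x. 2*n+1-x) ` D1 \<subseteq> {n+1..2*n}" by (rule refl_sub[OF D1])
  have rS: "(\<lambda>x. 2*n+1-x) ` S \<subseteq> {n+1..2*n}" by (rule refl_sub[OF S])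
  have Esub: "E \<subseteq> {1..2*n}" unfolding E_def using S rD1 by fastforce
  have Dsub: "D \<subseteq> {1..2*n}" unfolding D_def using D1 rS by fastforce
  have disj: "E \<inter> D = {}"
  proof (rule ccontr)
    assume "E \<inter> D \<noteq> {}"
    then obtain x where x: "x \<in> E" "x \<in> D" by blast
    show False
    proof (cases "x \<le> n")
      case True
      then have "x \<in> S" "x \<in> D1" using x rD1 rS unfolding E_def D_def by fastforce+
      then show False unfolding D1_def by simp
    next
      case False
      then obtain a b where "a \<in> D1" "x = 2*n+1-a" "b \<in> S" "x = 2*n+1-b"
        using x S D1 unfolding E_def D_def by fastforce
      moreover have "a \<le> n" "b \<le> n" using \<open>a \<in> D1\<close> \<open>b \<in> S\<close> S D1 by auto
      ultimately have "a = b" by simp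
      then show False using \<open>a \<in> D1\<close> \<open>b \<in> S\<close> unfolding D1_def by simp
    qed
  qed
  have rr: "\<And>A. A \<subseteq> {1..n} \<Longrightarrow> (\<lambda>x. 2*n+1-x) ` (\<lambda>x. 2*n+1-x) ` A = A"
  proof -
    fix A :: "nat set" assume A: "A \<subseteq> {1..n}"
    have "\<And>x. x \<in> A \<Longrightarrow> 2*n+1-(2*n+1-x) = x" using A by force
    then show "(\<lambda>x. 2*n+1-x) ` (\<lambda>x. 2*n+1-x) ` A = A" by (simp add: image_image)
  qed
  have rho: "(\<lambda>x. 2*n+1-x) ` E = D"
    unfolding E_def D_def image_Un rr[OF D1] by blast
  have ballot: "\<forall>t\<le>2*n. card {d\<in>D. d \<le> t} \<le> card {e\<in>E. e \<le> t}"
    proof (intro allI impI)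
    fix t :: nat assume "t \<le> 2*n"
    from cnt[OF this] show "card {d\<in>D. d \<le> t} \<le> card {e\<in>E. e \<le> t}" by linarith
  qed
  have fcond: "\<forall>x\<in>{1..2*n}. x \<notin> E \<longrightarrow> x \<notin> D \<longrightarrow> card {d\<in>D. d \<le> x} = card {e\<in>E. e \<le> x}"
  proof (intro ballI impI)
    fix x assume x: "x \<in> {1..2*n}" "x \<notin> E" "x \<notin> D"
    have "hgt S (if x \<le> n then x else 2*n - x) = 0"
    proof (cases "x \<le> n")
      case True
      have "x \<notin> S" "x \<notin> D1" using x unfolding E_def D_def by auto
      then have "hgt S (x-1) = 0" using True x unfolding D1_def by auto
      moreover have "x = Suc (x-1)" using x by simp
      ultimately have "hgt S x = 0" using \<open>x \<notin> S\<close> by (metis diff_0_eq_0 hgt.simps(2))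
      then show ?thesis using True by simp
    next
      case False
      define y where "y = 2*n+1-x"
      have y: "y \<in> {1..n}" "x = 2*n+1-y" using x False unfolding y_def by auto
      have "y \<notin> S" using x y unfolding D_def by auto
      moreover have "y \<notin> D1" using x y unfolding E_def by auto
      ultimately have "hgt S (y-1) = 0" using y unfolding D1_def by auto
      moreover have "2*n - x = y - 1" using y by simp
      ultimately show ?thesis using False by simp
    qed
    then show "card {d\<in>D. d \<le> x} = card {e\<in>E. e \<le> x}" using cnt[of x] x by simp
  qed
  obtain \<pi> where p: "\<pi> \<in> centro_inv_321 (2*n)" "{i\<in>{1..2*n}. \<pi> i > i} = E"
    using build_exists[OF Esub Dsub disj _ ballot fcond] rho by auto
  have "{i\<in>{1..n}. \<pi> i > i} = E \<inter> {1..n}" using p(2) by auto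
  also have "\<dots> = S" unfolding E_def using S rD1 by fastforce
  finally show ?thesis using p(1) by blast
qed

lemma basics:
  assumes "\<pi> \<in> centro_inv_321 m"
  shows "\<pi> permutes {1..m}" "\<And>x. \<pi> (\<pi> x) = x" "\<And>x. x \<in> {1..m} \<Longrightarrow> \<pi> x \<in> {1..m}"
    "\<And>x. x \<notin> {1..m} \<Longrightarrow> \<pi> x = x" "\<And>i. i \<in> {1..m} \<Longrightarrow> \<pi> i + \<pi> (m + 1 - i) = m + 1"
    "\<And>i j k. 1 \<le> i \<Longrightarrow> i < j \<Longrightarrow> j < k \<Longrightarrow> k \<le> m \<Longrightarrow> \<pi> j < \<pi> i \<Longrightarrow> \<pi> k < \<pi> j \<Longrightarrow> False"
proof -
  have p: "\<pi> permutes {1..m}" "inv \<pi> = \<pi>" "centrosymmetric m \<pi>" "avoids321 m \<pi>"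
    using assms unfolding centro_inv_321_def by auto
  show "\<pi> permutes {1..m}" by (rule p(1))
  show "\<And>x. \<pi> (\<pi> x) = x" using permutes_inverses(2)[OF p(1)] p(2) by metis
  show "\<And>x. x \<in> {1..m} \<Longrightarrow> \<pi> x \<in> {1..m}" by (metis permutes_in_image[OF p(1)])
  show "\<And>x. x \<notin> {1..m} \<Longrightarrow> \<pi> x = x" using p(1) by (simp add: permutes_not_in)
  show "\<And>i. i \<in> {1..m} \<Longrightarrow> \<pi> i + \<pi> (m + 1 - i) = m + 1" using p(3) unfolding centrosymmetric_def by blast
  show "\<And>i j k. 1 \<le> i \<Longrightarrow> i < j \<Longrightarrow> j < k \<Longrightarrow> k \<le> m \<Longrightarrow> \<pi> j < \<pi> i \<Longrightarrow> \<pi> k < \<pi> j \<Longrightarrow> False"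
    using p(4) unfolding avoids321_def by blast
qed

lemma exc_mono:
  assumes p: "\<pi> \<in> centro_inv_321 m" and ij: "i \<in> {1..m}" "j \<in> {1..m}" "i < j" "\<pi> i > i" "\<pi> j > j"
  shows "\<pi> i < \<pi> j"
proof (rule ccontr)
  note b = basics[OF p]
  assume "\<not> \<pi> i < \<pi> j"
  moreover have "\<pi> i \<noteq> \<pi> j"
  proof
    assume "\<pi> i = \<pi> j"
    then have "\<pi> (\<pi> i) = \<pi> (\<pi> j)" by simp
    then show False using b(2) ij by simp
  qed
  ultimately have lt: "\<pi> j < \<pi> i" by simp
  have "\<pi> i \<in> {1..m}" using b(3) ij by blast
  then show False
    using b(6)[of j "\<pi> j" "\<pi> i"] b(2)[of i] b(2)[of j] ij lt by auto
qed

lemma descent_iff: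
  assumes p: "\<pi> \<in> centro_inv_321 (2*n)" and i: "i \<in> {1..n}"
  shows "\<pi> (i+1) < \<pi> i \<longleftrightarrow> (\<pi> i > i \<and> \<not> \<pi> (i+1) > i+1)"
proof
  note b = basics[OF p]
  have i1: "i \<in> {1..2*n}" "i+1 \<in> {1..2*n}" using i by auto
  assume lt: "\<pi> (i+1) < \<pi> i"
  show "\<pi> i > i \<and> \<not> \<pi> (i+1) > i+1"
  proof
    show "\<pi> i > i"
    proof (rule ccontr)
      assume "\<not> \<pi> i > i"
      then have le: "\<pi> i \<le> i" by simp
      define a where "a = \<pi> (i+1)"
      have a: "a \<in> {1..2*n}" "\<pi> a = i+1" "a < \<pi> i" using b(3) i1 b(2) lt unfolding a_def by auto
      show False
      proof (cases "\<pi> i = i")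
        case True
        then show False using b(6)[of a i "i+1"] a i1 le unfolding a_def by auto
      next
        case False
        then have bi: "\<pi> i < i" using le by simp
        have "\<pi> i \<in> {1..2*n}" using b(3) i1 by blast
        moreover have "\<pi> (\<pi> i) > \<pi> i" using b(2)[of i] bi by simp
        moreover have "a < \<pi> a" using a le by simp
        ultimately have "\<pi> a < \<pi> (\<pi> i)" using exc_mono[OF p a(1), of "\<pi> i"] a by auto
        then show False using a b(2)[of i] by simp
      qed
    qed
    moreover show "\<not> \<pi> (i+1) > i+1"
    proof
      assume "\<pi> (i+1) > i+1"
      then have "\<pi> i < \<pi> (i+1)" using exc_mono[OF p i1(1) i1(2)] lt by auto
      then show False using lt by simp
    qed
  qed
next
  note b = basics[OF p]
  assume h: "\<pi> i > i \<and> \<not> \<pi> (i+1) > i+1"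
  have "\<pi> i \<noteq> \<pi> (i+1)" using b(2) by (metis n_not_Suc_n Suc_eq_plus1)
  then show "\<pi> (i+1) < \<pi> i" using h by auto
qed

lemma des_plus_eq:
  assumes p: "\<pi> \<in> centro_inv_321 (2*n)"
  shows "des_plus (2*n) \<pi> = card {i\<in>{i\<in>{1..n}. \<pi> i > i}. i+1 \<notin> {i\<in>{1..n}. \<pi> i > i}}"
proof -
  note b = basics[OF p]
  have "Des (2*n) \<pi> \<inter> {1..2*n div 2} = {i\<in>{i\<in>{1..n}. \<pi> i > i}. i+1 \<notin> {i\<in>{1..n}. \<pi> i > i}}"
  proof (intro set_eqI iffI)
    fix i assume "i \<in> Des (2*n) \<pi> \<inter> {1..2*n div 2}"
    then have i: "i \<in> {1..n}" "\<pi> (i+1) < \<pi> i" unfolding Des_def by auto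
    then have h: "\<pi> i > i \<and> \<not> \<pi> (i+1) > i+1" using descent_iff[OF p] by blast
    then show "i \<in> {i\<in>{i\<in>{1..n}. \<pi> i > i}. i+1 \<notin> {i\<in>{1..n}. \<pi> i > i}}" using i by auto
  next
    fix i assume "i \<in> {i\<in>{i\<in>{1..n}. \<pi> i > i}. i+1 \<notin> {i\<in>{1..n}. \<pi> i > i}}"
    then have i: "i \<in> {1..n}" "\<pi> i > i" "i+1 \<notin> {i\<in>{1..n}. \<pi> i > i}" by auto
    have "\<not> \<pi> (i+1) > i+1"
    proof (cases "i = n")
      case True
      have "\<pi> n + \<pi> (2*n + 1 - n) = 2*n+1" using b(5)[of n] i True by auto
      moreover have "2*n+1-n = n+1" by simp
      ultimately show ?thesis using i True by auto
    next
      case False then show ?thesis using i by auto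
    qed
    then have "\<pi> (i+1) < \<pi> i" using descent_iff[OF p i(1)] i by blast
    then show "i \<in> Des (2*n) \<pi> \<inter> {1..2*n div 2}" unfolding Des_def using i by auto
  qed
  then show ?thesis unfolding des_plus_def by simp
qed

lemma fix_count:
  assumes p: "\<tau> \<in> centro_inv_321 m" and x: "x \<in> {1..m}" "\<tau> x = x"
  shows "card {e\<in>{1..m}. \<tau> e > e \<and> e < x} \<le> card {d\<in>{1..m}. \<tau> d < d \<and> d < x}"
proof (rule card_inj_on_le)
  note b = basics[OF p]
  show "inj_on \<tau> {e\<in>{1..m}. \<tau> e > e \<and> e < x}" by (rule inj_onI) (metis b(2))
  show "finite {d\<in>{1..m}. \<tau> d < d \<and> d < x}" by simp
  show "\<tau> ` {e\<in>{1..m}. \<tau> e > e \<and> e < x} \<subseteq> {d\<in>{1..m}. \<tau> d < d \<and> d < x}"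
  proof
    fix y assume "y \<in> \<tau> ` {e\<in>{1..m}. \<tau> e > e \<and> e < x}"
    then obtain e where e: "e \<in> {1..m}" "\<tau> e > e" "e < x" "y = \<tau> e" by blast
    have ne: "\<tau> e \<noteq> x"
    proof
      assume "\<tau> e = x"
      then have "\<tau> (\<tau> e) = \<tau> x" by simp
      then show False using e x b(2)[of e] by simp
    qed
    have "\<tau> e < x"
    proof (rule ccontr)
      assume "\<not> \<tau> e < x"
      then have "x < \<tau> e" using ne by simp
      moreover have "\<tau> e \<in> {1..m}" using b(3) e by blast
      ultimately show False using b(6)[of e x "\<tau> e"] e x b(2)[of e] by auto
    qed
    then show "y \<in> {d\<in>{1..m}. \<tau> d < d \<and> d < x}" using e b(2)[of e] b(3)[OF e(1)] by auto
  qed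
qed

lemma D_count:
  assumes p: "\<tau> \<in> centro_inv_321 m" and x: "x \<in> {1..m}"
  shows "card {d\<in>{1..m}. \<tau> d < d \<and> d \<le> x} \<le> card {e\<in>{1..m}. \<tau> e > e \<and> e < x}"
proof (rule card_inj_on_le)
  note b = basics[OF p]
  show "inj_on \<tau> {d\<in>{1..m}. \<tau> d < d \<and> d \<le> x}" by (rule inj_onI) (metis b(2))
  show "finite {e\<in>{1..m}. \<tau> e > e \<and> e < x}" by simp
  show "\<tau> ` {d\<in>{1..m}. \<tau> d < d \<and> d \<le> x} \<subseteq> {e\<in>{1..m}. \<tau> e > e \<and> e < x}"
  proof
    fix y assume "y \<in> \<tau> ` {d\<in>{1..m}. \<tau> d < d \<and> d \<le> x}"
    then obtain d where d: "d \<in> {1..m}" "\<tau> d < d" "d \<le> x" "y = \<tau> d" by blast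
    have "\<tau> y = d" using d b(2) by simp
    moreover have "y \<in> {1..m}" using b(3)[OF d(1)] d(4) by simp
    ultimately show "y \<in> {e\<in>{1..m}. \<tau> e > e \<and> e < x}" using d by auto
  qed
qed

lemma inj_aux:
  assumes p: "\<pi> \<in> centro_inv_321 (2*n)" and s: "\<sigma> \<in> centro_inv_321 (2*n)"
    and same: "{i\<in>{1..n}. \<pi> i > i} = {i\<in>{1..n}. \<sigma> i > i}"
    and x: "x \<in> {1..n}" "\<pi> x < x" "\<not> \<sigma> x < x"
    and least: "\<forall>y\<in>{1..n}. y < x \<longrightarrow> (\<pi> y < y \<longleftrightarrow> \<sigma> y < y)"
  shows False
proof -
  have x2: "x \<in> {1..2*n}" using x by auto
  have "x \<notin> {i\<in>{1..n}. \<pi> i > i}" using x by auto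
  then have "x \<notin> {i\<in>{1..n}. \<sigma> i > i}" unfolding same .
  then have "\<not> \<sigma> x > x" using x(1) by blast
  then have sx: "\<sigma> x = x" using x by simp
  have eqE: "{e\<in>{1..2*n}. \<pi> e > e \<and> e < x} = {e\<in>{1..2*n}. \<sigma> e > e \<and> e < x}"
  proof -
    have "\<And>e. e < x \<Longrightarrow> e \<in> {1..2*n} \<Longrightarrow> e \<in> {1..n}" using x by auto
    then show ?thesis using same by blast
  qed
  have eqD: "{e\<in>{1..2*n}. \<pi> e < e \<and> e < x} = {e\<in>{1..2*n}. \<sigma> e < e \<and> e < x}"
  proof -
    have "\<And>e. e < x \<Longrightarrow> e \<in> {1..2*n} \<Longrightarrow> e \<in> {1..n}" using x by auto
    then show ?thesis using least by blast
  qed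
  have ins: "{d\<in>{1..2*n}. \<pi> d < d \<and> d \<le> x} = insert x {d\<in>{1..2*n}. \<pi> d < d \<and> d < x}"
    using x2 x by auto
  have c1: "card {d\<in>{1..2*n}. \<pi> d < d \<and> d \<le> x} = Suc (card {d\<in>{1..2*n}. \<pi> d < d \<and> d < x})"
    unfolding ins by (rule card_insert_disjoint) auto
  have "card {d\<in>{1..2*n}. \<pi> d < d \<and> d \<le> x} \<le> card {e\<in>{1..2*n}. \<pi> e > e \<and> e < x}"
    by (rule D_count[OF p x2])
  also have "\<dots> = card {e\<in>{1..2*n}. \<sigma> e > e \<and> e < x}" using eqE by simp
  also have "\<dots> \<le> card {d\<in>{1..2*n}. \<sigma> d < d \<and> d < x}" by (rule fix_count[OF s x2 sx])
  also have "\<dots> = card {d\<in>{1..2*n}. \<pi> d < d \<and> d < x}" using eqD by simp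
  finally show False using c1 by simp
qed

lemma D_half_eq:
  assumes p: "\<pi> \<in> centro_inv_321 (2*n)" and s: "\<sigma> \<in> centro_inv_321 (2*n)"
    and same: "{i\<in>{1..n}. \<pi> i > i} = {i\<in>{1..n}. \<sigma> i > i}"
  shows "\<forall>y\<in>{1..n}. \<pi> y < y \<longleftrightarrow> \<sigma> y < y"
proof (rule ccontr)
  assume "\<not> ?thesis"
  then have "\<exists>y. y \<in> {1..n} \<and> \<not> (\<pi> y < y \<longleftrightarrow> \<sigma> y < y)" by blast
  then obtain x where x: "x \<in> {1..n} \<and> \<not> (\<pi> x < x \<longleftrightarrow> \<sigma> x < x)"
    and least: "\<And>y. y < x \<Longrightarrow> \<not> (y \<in> {1..n} \<and> \<not> (\<pi> y < y \<longleftrightarrow> \<sigma> y < y))"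
    using exists_least_iff[of "\<lambda>y. y \<in> {1..n} \<and> \<not> (\<pi> y < y \<longleftrightarrow> \<sigma> y < y)"] by blast
  have l1: "\<forall>y\<in>{1..n}. y < x \<longrightarrow> (\<pi> y < y \<longleftrightarrow> \<sigma> y < y)" using least by blast
  have l2: "\<forall>y\<in>{1..n}. y < x \<longrightarrow> (\<sigma> y < y \<longleftrightarrow> \<pi> y < y)" using least by blast
  show False
  proof (cases "\<pi> x < x")
    case True
    then show False using inj_aux[OF p s same _ True _ l1] x by blast
  next
    case False
    then have "\<sigma> x < x" using x by blast
    then show False using inj_aux[OF s p same[symmetric] _ _ False l2] x by blast
  qed
qed

lemma exc_smb:
  assumes p: "\<pi> \<in> centro_inv_321 m"
  shows "smb {i\<in>{1..m}. \<pi> i > i} {i\<in>{1..m}. \<pi> i < i} \<pi>"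
proof -
  note b = basics[OF p]
  have "bij_betw \<pi> {i\<in>{1..m}. \<pi> i > i} {i\<in>{1..m}. \<pi> i < i}"
  proof (rule bij_betw_byWitness[where f' = \<pi>])
    show "\<forall>a\<in>{i \<in> {1..m}. i < \<pi> i}. \<pi> (\<pi> a) = a" using b(2) by blast
    show "\<forall>a'\<in>{i \<in> {1..m}. \<pi> i < i}. \<pi> (\<pi> a') = a'" using b(2) by blast
    show "\<pi> ` {i \<in> {1..m}. i < \<pi> i} \<subseteq> {i \<in> {1..m}. \<pi> i < i}"
    proof
      fix y assume "y \<in> \<pi> ` {i \<in> {1..m}. i < \<pi> i}"
      then obtain d where d: "d \<in> {1..m}" "d < \<pi> d" "y = \<pi> d" by blast
      have "\<pi> y = d" using d b(2) by simp
      moreover have "y \<in> {1..m}" using b(3)[OF d(1)] d(3) by simp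
      ultimately show "y \<in> {i \<in> {1..m}. \<pi> i < i}" using d by auto
    qed
    show "\<pi> ` {i \<in> {1..m}. \<pi> i < i} \<subseteq> {i \<in> {1..m}. i < \<pi> i}"
    proof
      fix y assume "y \<in> \<pi> ` {i \<in> {1..m}. \<pi> i < i}"
      then obtain d where d: "d \<in> {1..m}" "\<pi> d < d" "y = \<pi> d" by blast
      have "\<pi> y = d" using d b(2) by simp
      moreover have "y \<in> {1..m}" using b(3)[OF d(1)] d(3) by simp
      ultimately show "y \<in> {i \<in> {1..m}. i < \<pi> i}" using d by auto
    qed
  qed
  moreover have "\<forall>x\<in>{i\<in>{1..m}. \<pi> i > i}. \<forall>y\<in>{i\<in>{1..m}. \<pi> i > i}. x < y \<longrightarrow> \<pi> x < \<pi> y"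
    using exc_mono[OF p] by blast
  ultimately show ?thesis unfolding smb_def by blast
qed

lemma refl_exc:
  assumes t: "\<tau> \<in> centro_inv_321 (2*n)" and i: "i \<in> {1..2*n}"
  shows "(\<tau> i > i \<longleftrightarrow> \<tau> (2*n+1-i) < 2*n+1-i) \<and> (\<tau> i < i \<longleftrightarrow> \<tau> (2*n+1-i) > 2*n+1-i)"
proof -
  have "\<tau> i + \<tau> (2*n+1-i) = 2*n+1" using basics(5)[OF t i] by simp
  then show ?thesis using i by auto
qed

lemma injective:
  assumes p: "\<pi> \<in> centro_inv_321 (2*n)" and s: "\<sigma> \<in> centro_inv_321 (2*n)"
    and same: "{i\<in>{1..n}. \<pi> i > i} = {i\<in>{1..n}. \<sigma> i > i}"
  shows "\<pi> = \<sigma>"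
proof -
  note bp = basics[OF p] and bs = basics[OF s]
  have Dh: "\<forall>y\<in>{1..n}. \<pi> y < y \<longleftrightarrow> \<sigma> y < y" by (rule D_half_eq[OF p s same])
  have Eh: "\<And>y. y \<in> {1..n} \<Longrightarrow> \<pi> y > y \<longleftrightarrow> \<sigma> y > y"
  proof -
    fix y assume y: "y \<in> {1..n}"
    have "y \<in> {i\<in>{1..n}. \<pi> i > i} \<longleftrightarrow> y \<in> {i\<in>{1..n}. \<sigma> i > i}" by (simp only: same)
    then show "\<pi> y > y \<longleftrightarrow> \<sigma> y > y" using y by simp
  qed
  have EDall: "\<And>y. y \<in> {1..2*n} \<Longrightarrow> (\<pi> y > y \<longleftrightarrow> \<sigma> y > y) \<and> (\<pi> y < y \<longleftrightarrow> \<sigma> y < y)"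
  proof -
    fix y assume y: "y \<in> {1..2*n}"
    show "(\<pi> y > y \<longleftrightarrow> \<sigma> y > y) \<and> (\<pi> y < y \<longleftrightarrow> \<sigma> y < y)"
    proof (cases "y \<le> n")
      case True
      then have "y \<in> {1..n}" using y by simp
      then show ?thesis using Dh Eh by simp
    next
      case False
      have y': "2*n+1-y \<in> {1..n}" using False y by auto
      have r1: "(\<pi> y > y \<longleftrightarrow> \<pi> (2*n+1-y) < 2*n+1-y) \<and> (\<pi> y < y \<longleftrightarrow> \<pi> (2*n+1-y) > 2*n+1-y)"
        by (rule refl_exc[OF p y])
      have r2: "(\<sigma> y > y \<longleftrightarrow> \<sigma> (2*n+1-y) < 2*n+1-y) \<and> (\<sigma> y < y \<longleftrightarrow> \<sigma> (2*n+1-y) > 2*n+1-y)"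
        by (rule refl_exc[OF s y])
      have e1: "\<pi> (2*n+1-y) < 2*n+1-y \<longleftrightarrow> \<sigma> (2*n+1-y) < 2*n+1-y" using Dh y' by simp
      have e2: "\<pi> (2*n+1-y) > 2*n+1-y \<longleftrightarrow> \<sigma> (2*n+1-y) > 2*n+1-y" using Eh[OF y'] .
      show ?thesis using r1 r2 e1 e2 by simp
    qed
  qed
  have eE: "{i\<in>{1..2*n}. \<pi> i > i} = {i\<in>{1..2*n}. \<sigma> i > i}"
  proof (rule set_eqI)
    fix i show "i \<in> {i\<in>{1..2*n}. \<pi> i > i} \<longleftrightarrow> i \<in> {i\<in>{1..2*n}. \<sigma> i > i}"
      using EDall[of i] by auto
  qed
  have eD: "{i\<in>{1..2*n}. \<pi> i < i} = {i\<in>{1..2*n}. \<sigma> i < i}"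
  proof (rule set_eqI)
    fix i show "i \<in> {i\<in>{1..2*n}. \<pi> i < i} \<longleftrightarrow> i \<in> {i\<in>{1..2*n}. \<sigma> i < i}"
      using EDall[of i] by auto
  qed
  have sm: "smb {i\<in>{1..2*n}. \<pi> i > i} {i\<in>{1..2*n}. \<pi> i < i} \<sigma>"
    unfolding eE eD by (rule exc_smb[OF s])
  have onE: "\<forall>x\<in>{i\<in>{1..2*n}. \<pi> i > i}. \<pi> x = \<sigma> x" by (rule smb_unique[OF exc_smb[OF p] sm])
  show "\<pi> = \<sigma>"
  proof (rule ext)
    fix x show "\<pi> x = \<sigma> x"
    proof (cases "x \<in> {1..2*n}")
      case False then show ?thesis using bp(4)[OF False] bs(4)[OF False] by simp
    next
      case True
      show ?thesis
      proof (cases "\<pi> x > x")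
        case True2: True
        then have "x \<in> {i\<in>{1..2*n}. \<pi> i > i}" using True by simp
        then show ?thesis using onE by blast
      next
        case False2: False
        show ?thesis
        proof (cases "\<pi> x < x")
          case True3: True
          have e: "\<pi> x \<in> {1..2*n}" "\<pi> (\<pi> x) > \<pi> x" using bp(2)[of x] bp(3)[OF True] True3 by auto
          then have "\<pi> x \<in> {i\<in>{1..2*n}. \<pi> i > i}" by blast
          then have "\<pi> (\<pi> x) = \<sigma> (\<pi> x)" using onE by blast
          then have "\<sigma> (\<pi> x) = x" using bp(2)[of x] by simp
          then have "\<sigma> (\<sigma> (\<pi> x)) = \<sigma> x" by (rule arg_cong)
          then show ?thesis using bs(2)[of "\<pi> x"] by simp
        next
          case False3: False
          have "\<pi> x = x" using False2 False3 by simp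
          moreover have "\<not> \<sigma> x > x" "\<not> \<sigma> x < x" using EDall[OF True] False2 False3 by auto
          then have "\<sigma> x = x" by simp
          ultimately show ?thesis by simp
        qed
      qed
    qed
  qed
qed

lemma binom_part:
  fixes q :: complex and N :: nat
  shows "(\<Sum>k\<le>N. of_nat (N choose (2 * k)) * q ^ k) = ((1 + csqrt q) ^ N + (1 - csqrt q) ^ N) / 2"
proof -
  define s where "s = csqrt q"
  have sq: "s^2 = q" unfolding s_def by simp
  define g where "g = (\<lambda>k. of_nat (N choose k) * (s^k + (-s)^k) :: complex)"
  have "(1 + s)^N = (\<Sum>k\<le>N. of_nat (N choose k) * s^k)"
    using binomial_ring[of s 1 N] by (simp add: add.commute)
  moreover have "(1 - s)^N = (\<Sum>k\<le>N. of_nat (N choose k) * (-s)^k)"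
    using binomial_ring[of "-s" 1 N] by (simp add: add.commute)
  ultimately have "(1 + s)^N + (1 - s)^N = (\<Sum>k\<le>N. g k)"
    unfolding g_def by (simp add: sum.distrib distrib_left)
  also have "\<dots> = (\<Sum>k\<le>Suc (2*N). g k)"
    by (rule sum.mono_neutral_left) (auto simp: g_def)
  also have "\<dots> = (\<Sum>i\<le>N. g (2*i) + g (Suc (2*i)))" by (rule sum.in_pairs_0)
  also have "\<dots> = (\<Sum>i\<le>N. 2 * (of_nat (N choose (2*i)) * q^i))"
  proof (rule sum.cong[OF refl])
    fix i
    have "g (2*i) = 2 * (of_nat (N choose (2*i)) * q^i)"
      unfolding g_def by (simp add: power_mult sq[symmetric])
    moreover have "g (Suc (2*i)) = 0" unfolding g_def by simp
    ultimately show "g (2*i) + g (Suc (2*i)) = 2 * (of_nat (N choose (2*i)) * q^i)" by simp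
  qed
  also have "\<dots> = 2 * (\<Sum>i\<le>N. of_nat (N choose (2*i)) * q^i)" by (simp add: sum_distrib_left)
  finally show ?thesis unfolding s_def by simp
qed

definition rr :: "nat set \<Rightarrow> nat" where "rr S = card {i\<in>S. i+1 \<notin> S}"

lemma rr_insert:
  assumes S: "S \<subseteq> {1..n}"
  shows "rr (insert (Suc n) S) = rr S + (if n \<in> S then 0 else 1)"
proof -
  have fS: "finite S" using S finite_subset by blast
  have nS: "Suc n \<notin> S" using S by auto
  have a: "{i\<in>insert (Suc n) S. i+1 \<notin> insert (Suc n) S} = insert (Suc n) {i\<in>S. i+1 \<notin> S \<and> i \<noteq> n}"
    using nS S by auto
  have ca: "card {i\<in>insert (Suc n) S. i+1 \<notin> insert (Suc n) S} = Suc (card {i\<in>S. i+1 \<notin> S \<and> i \<noteq> n})"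
    unfolding a by (rule card_insert_disjoint) (use fS nS in auto)
  show ?thesis
  proof (cases "n \<in> S")
    case True
    have "{i\<in>S. i+1 \<notin> S} = insert n {i\<in>S. i+1 \<notin> S \<and> i \<noteq> n}" using True nS by auto
    then have "card {i\<in>S. i+1 \<notin> S} = Suc (card {i\<in>S. i+1 \<notin> S \<and> i \<noteq> n})"
      using fS by simp
    then show ?thesis unfolding rr_def using ca True by simp
  next
    case False
    have "{i\<in>S. i+1 \<notin> S} = {i\<in>S. i+1 \<notin> S \<and> i \<noteq> n}" using False by auto
    then show ?thesis unfolding rr_def using ca False by simp
  qed
qed

lemma sum_split_pred:
  "finite A \<Longrightarrow> sum g A = sum g {x\<in>A. P x} + sum g {x\<in>A. \<not> P x}"
proof -
  assume fA: "finite A"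
  have "A = {x\<in>A. P x} \<union> {x\<in>A. \<not> P x}" by auto
  moreover have "{x\<in>A. P x} \<inter> {x\<in>A. \<not> P x} = {}" by auto
  ultimately show ?thesis using fA by (metis (no_types, lifting) finite_Un sum.union_disjoint)
qed

lemma XY:
  fixes q :: complex
  defines "s \<equiv> csqrt q"
  shows "(\<Sum>S\<in>{S\<in>Pow {1..n}. n \<notin> S}. q ^ rr S) = ((1+s)^n + (1-s)^n) / 2
       \<and> (\<Sum>S\<in>{S\<in>Pow {1..n}. n \<in> S}. q ^ rr S) = s * ((1+s)^n - (1-s)^n) / 2"
proof (induction n)
  case 0
  have "{S\<in>Pow {1..0::nat}. 0 \<notin> S} = {{}}" by auto
  moreover have "{S\<in>Pow {1..0::nat}. 0 \<in> S} = {}" by auto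
  ultimately show ?case by (simp add: rr_def)
next
  case (Suc n)
  define X where "X = (\<Sum>S\<in>{S\<in>Pow {1..n}. n \<notin> S}. q ^ rr S)"
  define Y where "Y = (\<Sum>S\<in>{S\<in>Pow {1..n}. n \<in> S}. q ^ rr S)"
  have IH: "X = ((1+s)^n + (1-s)^n) / 2" "Y = s * ((1+s)^n - (1-s)^n) / 2"
    using Suc unfolding X_def Y_def by auto
  have sq: "s^2 = q" unfolding s_def by simp
  have P: "Pow {1..Suc n} = Pow {1..n} \<union> insert (Suc n) ` Pow {1..n}"
    by (simp add: atLeastAtMostSuc_conv Pow_insert)
  have e1: "{S\<in>Pow {1..Suc n}. Suc n \<notin> S} = Pow {1..n}"
    unfolding P by auto
  have e2: "{S\<in>Pow {1..Suc n}. Suc n \<in> S} = insert (Suc n) ` Pow {1..n}"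
    unfolding P by auto
  have split: "(\<Sum>S\<in>Pow {1..n}. q ^ rr S) = X + Y"
    unfolding X_def Y_def using sum_split_pred[of "Pow {1..n}" "\<lambda>S. q ^ rr S" "\<lambda>S. n \<notin> S"]
    by simp
  have inj: "inj_on (insert (Suc n)) (Pow {1..n})"
  proof (rule inj_onI)
    fix A B assume "A \<in> Pow {1..n}" "B \<in> Pow {1..n}" "insert (Suc n) A = insert (Suc n) B"
    then show "A = B" by (metis PowD atLeastAtMost_iff insert_ident not_less_eq_eq order_refl subsetD)
  qed
  have "(\<Sum>S\<in>insert (Suc n) ` Pow {1..n}. q ^ rr S) = (\<Sum>S\<in>Pow {1..n}. q ^ rr (insert (Suc n) S))"
    by (rule sum.reindex[OF inj, unfolded comp_def])
  also have "\<dots> = (\<Sum>S\<in>Pow {1..n}. q ^ rr S * (if n \<in> S then 1 else q))"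
    by (rule sum.cong[OF refl]) (simp add: rr_insert)
  also have "\<dots> = (\<Sum>S\<in>{S\<in>Pow {1..n}. n \<in> S}. q ^ rr S * (if n \<in> S then 1 else q))
       + (\<Sum>S\<in>{S\<in>Pow {1..n}. \<not> n \<in> S}. q ^ rr S * (if n \<in> S then 1 else q))"
    by (rule sum_split_pred) simp
  also have "\<dots> = Y + q * X"
    unfolding X_def Y_def by (simp add: sum_distrib_left mult.commute)
  finally have ys: "(\<Sum>S\<in>{S\<in>Pow {1..Suc n}. Suc n \<in> S}. q ^ rr S) = Y + q * X" unfolding e2 .
  have xs: "(\<Sum>S\<in>{S\<in>Pow {1..Suc n}. Suc n \<notin> S}. q ^ rr S) = X + Y" unfolding e1 split ..
  show ?case
  proof
    show "(\<Sum>S\<in>{S\<in>Pow {1..Suc n}. Suc n \<notin> S}. q ^ rr S) = ((1+s)^Suc n + (1-s)^Suc n) / 2"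
      unfolding xs IH by (simp add: field_simps)
    show "(\<Sum>S\<in>{S\<in>Pow {1..Suc n}. Suc n \<in> S}. q ^ rr S) = s * ((1+s)^Suc n - (1-s)^Suc n) / 2"
    proof -
      have alg: "Y + q * X = s * ((1+s)^Suc n - (1-s)^Suc n) / 2"
        unfolding IH sq[symmetric] by (simp add: field_simps power2_eq_square)
      show ?thesis using ys alg by simp
    qed
  qed
qed

lemma pow_sum:
  fixes q :: complex
  shows "(\<Sum>S\<in>Pow {1..n}. q ^ rr S) = ((1 + csqrt q) ^ (n + 1) + (1 - csqrt q) ^ (n + 1)) / 2"
proof -
  have P: "Pow {1..Suc n} = Pow {1..n} \<union> insert (Suc n) ` Pow {1..n}"
    by (simp add: atLeastAtMostSuc_conv Pow_insert)
  have e1: "{S\<in>Pow {1..Suc n}. Suc n \<notin> S} = Pow {1..n}"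
    unfolding P by auto
  show ?thesis using XY[of q "Suc n"] unfolding e1 by simp
qed

lemma perm_sum:
  fixes q :: complex
  shows "(\<Sum>\<pi>\<in>centro_inv_321 (2 * n). q ^ des_plus (2 * n) \<pi>) = (\<Sum>S\<in>Pow {1..n}. q ^ rr S)"
proof -
  define \<Phi> where "\<Phi> = (\<lambda>\<pi>::nat\<Rightarrow>nat. {i\<in>{1..n}. \<pi> i > i})"
  have inj: "inj_on \<Phi> (centro_inv_321 (2 * n))"
    by (rule inj_onI) (use injective in \<open>auto simp: \<Phi>_def\<close>)
  have img: "\<Phi> ` centro_inv_321 (2 * n) = Pow {1..n}"
  proof
    show "\<Phi> ` centro_inv_321 (2 * n) \<subseteq> Pow {1..n}" unfolding \<Phi>_def by auto
    show "Pow {1..n} \<subseteq> \<Phi> ` centro_inv_321 (2 * n)"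
    proof
      fix S assume "S \<in> Pow {1..n}"
      then obtain \<pi> where "\<pi> \<in> centro_inv_321 (2*n)" "{i\<in>{1..n}. \<pi> i > i} = S"
        using exists_perm[of S n] by auto
      then show "S \<in> \<Phi> ` centro_inv_321 (2 * n)" unfolding \<Phi>_def by force
    qed
  qed
  have "(\<Sum>S\<in>Pow {1..n}. q ^ rr S) = (\<Sum>\<pi>\<in>centro_inv_321 (2 * n). q ^ rr (\<Phi> \<pi>))"
    unfolding img[symmetric] by (rule sum.reindex[OF inj, unfolded comp_def])
  also have "\<dots> = (\<Sum>\<pi>\<in>centro_inv_321 (2 * n). q ^ des_plus (2 * n) \<pi>)"
    by (rule sum.cong[OF refl]) (simp add: des_plus_eq \<Phi>_def rr_def)
  finally show ?thesis by simp
qed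

theorem mainTheorem1:
  fixes n :: nat and q :: complex
  shows "(\<Sum>\<pi>\<in>centro_inv_321 (2 * n). q ^ des_plus (2 * n) \<pi>)
           = (\<Sum>k\<le>n + 1. of_nat ((n + 1) choose (2 * k)) * q ^ k)
       \<and> (\<Sum>k\<le>n + 1. of_nat ((n + 1) choose (2 * k)) * q ^ k)
           = ((1 + csqrt q) ^ (n + 1) + (1 - csqrt q) ^ (n + 1)) / 2"
  unfolding perm_sum[where q=q and n=n] pow_sum[where q=q and n=n] binom_part[where q=q and N="n+1"] by (rule conjI refl)+

end
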